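(* For every metric space $M$, $\dim_{\mathrm{Box}}(M)\le\dim_{\mathrm{MST}}(M)$.
   Context: A minimal spanning tree (MST) on a finite set of points in a metric space is a spanning tree of the complete graph on those points that minimizes the sum of the edge lengths; for an edge $e$, $\|e\|$ is the distance between its endpoints, and for a tree $T$ and $d\ge 0$, $E_d(T)=\sum_{e\in T}\|e\|^d$. The MST dimension is \[ \dim_{\mathrm{MST}}(M):=\inf\{d\ge 0:\ \exists C<\infty \text{ such that } E_d(T)\le C \text{ for every MST } T \text{ on any finite set of distinct points of } M\}, \] with $\inf\emptyset=\infty$. For $\epsilon>0$ let $N(\epsilon)\in\{0,1,2,\dots\}\cup\{\infty\}$ be the maximal number of pairwise disjoint open balls of radius $\epsilon$ centered at points of $M$. The upper box dimension is \[ \dim_{\mathrm{Box}}(M):=\limsup_{\epsilon\to0}\frac{\log N(\epsilon)}{\log(1/\epsilon)}. \] *)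

theory Defs
  imports "HOL-Analysis.Analysis" "HOL-Library.Extended_Nat"
begin

definition complete_edges :: "'a set \<Rightarrow> 'a set set" where
  "complete_edges S = {{x, y} | x y. x \<in> S \<and> y \<in> S \<and> x \<noteq> y}"

definition adj :: "'a set set \<Rightarrow> 'a \<Rightarrow> 'a \<Rightarrow> bool" where
  "adj T x y \<longleftrightarrow> {x, y} \<in> T"

definition graph_connected :: "'a set \<Rightarrow> 'a set set \<Rightarrow> bool" where
  "graph_connected S T \<longleftrightarrow> (\<forall>x\<in>S. \<forall>y\<in>S. (adj T)\<^sup>*\<^sup>* x y)"

definition is_cycle :: "'a set set \<Rightarrow> 'a list \<Rightarrow> bool" where
  "is_cycle T vs \<longleftrightarrow> length vs \<ge> 3 \<and> distinct vs \<and>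
     (\<forall>i < length vs. adj T (vs ! i) (vs ! ((i + 1) mod length vs)))"

definition acyclic_graph :: "'a set set \<Rightarrow> bool" where
  "acyclic_graph T \<longleftrightarrow> \<not> (\<exists>vs. is_cycle T vs)"

definition spanning_tree :: "'a set \<Rightarrow> 'a set set \<Rightarrow> bool" where
  "spanning_tree S T \<longleftrightarrow> T \<subseteq> complete_edges S \<and> graph_connected S T \<and> acyclic_graph T"

definition edge_len :: "('a \<Rightarrow> 'a \<Rightarrow> real) \<Rightarrow> 'a set \<Rightarrow> real" where
  "edge_len d e = (THE r. \<exists>x y. e = {x, y} \<and> r = d x y)"

definition tree_energy :: "('a \<Rightarrow> 'a \<Rightarrow> real) \<Rightarrow> real \<Rightarrow> 'a set set \<Rightarrow> real" where
  "tree_energy d p T = (\<Sum>e\<in>T. edge_len d e powr p)"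

definition is_MST :: "('a \<Rightarrow> 'a \<Rightarrow> real) \<Rightarrow> 'a set \<Rightarrow> 'a set set \<Rightarrow> bool" where
  "is_MST d S T \<longleftrightarrow> spanning_tree S T \<and>
     (\<forall>T'. spanning_tree S T' \<longrightarrow> tree_energy d 1 T \<le> tree_energy d 1 T')"

definition dim_MST :: "'a set \<Rightarrow> ('a \<Rightarrow> 'a \<Rightarrow> real) \<Rightarrow> ereal" where
  "dim_MST M d = Inf (ereal ` {p. p \<ge> 0 \<and> (\<exists>C. \<forall>S T. finite S \<and> S \<subseteq> M \<and> is_MST d S T
        \<longrightarrow> tree_energy d p T \<le> C)})"

definition packing_number :: "'a set \<Rightarrow> ('a \<Rightarrow> 'a \<Rightarrow> real) \<Rightarrow> real \<Rightarrow> enat" where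
  "packing_number M d \<epsilon> = Sup {enat (card P) | P. finite P \<and> P \<subseteq> M \<and>
      (\<forall>x\<in>P. \<forall>y\<in>P. x \<noteq> y \<longrightarrow> Metric_space.mball M d x \<epsilon> \<inter> Metric_space.mball M d y \<epsilon> = {})}"

definition box_ratio :: "'a set \<Rightarrow> ('a \<Rightarrow> 'a \<Rightarrow> real) \<Rightarrow> real \<Rightarrow> ereal" where
  "box_ratio M d \<epsilon> = (case packing_number M d \<epsilon> of
       \<infinity> \<Rightarrow> \<infinity>
     | enat n \<Rightarrow> (if n = 0 then - \<infinity> else ereal (ln (real n) / ln (1 / \<epsilon>))))"

definition dim_Box :: "'a set \<Rightarrow> ('a \<Rightarrow> 'a \<Rightarrow> real) \<Rightarrow> ereal" where
  "dim_Box M d = Limsup (at_right 0) (box_ratio M d)"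

end

theory Submission
  imports Defs "HOL-Real_Asymp.Real_Asymp"
begin

lemma star_spanning:
  assumes c: "c \<in> P"
  shows "spanning_tree P {{c,x}|x. x\<in>P \<and> x\<noteq>c}" (is "spanning_tree P ?T")
proof -
  have sub: "?T \<subseteq> complete_edges P" using c unfolding complete_edges_def by blast
  have toc: "(adj ?T)\<^sup>*\<^sup>* x c" if "x \<in> P" for x
  proof (cases "x = c")
    case False
    then have "adj ?T x c" using that unfolding adj_def by (auto simp: insert_commute)
    then show ?thesis by blast
  qed simp
  have fromc: "(adj ?T)\<^sup>*\<^sup>* c y" if "y \<in> P" for y
  proof (cases "y = c")
    case False
    then have "adj ?T c y" using that unfolding adj_def by auto
    then show ?thesis by blast
  qed simp
  have conn: "graph_connected P ?T"
    unfolding graph_connected_def using toc fromc by (meson rtranclp_trans)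
  have ac: "acyclic_graph ?T"
    unfolding acyclic_graph_def
  proof
    assume "\<exists>vs. is_cycle ?T vs"
    then obtain vs where l: "length vs \<ge> 3" and dv: "distinct vs"
      and ad: "\<forall>i < length vs. adj ?T (vs ! i) (vs ! ((i + 1) mod length vs))"
      unfolding is_cycle_def by blast
    have inT: "c = a \<or> c = b" if "adj ?T a b" for a b
      using that unfolding adj_def by (auto simp: doubleton_eq_iff)
    have adi: "adj ?T (vs!i) (vs!((i+1) mod length vs))" if "i < length vs" for i
      using ad that by blast
    have e0: "c = vs!0 \<or> c = vs!1" using inT[OF adi[of 0]] l by force
    have e1: "c = vs!1 \<or> c = vs!2" using inT[OF adi[of 1]] l by (simp add: eval_nat_numeral)
    have e2: "c = vs!2 \<or> c = vs!(3 mod length vs)" using inT[OF adi[of 2]] l by (simp add: eval_nat_numeral)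
    have n01: "vs!0 \<noteq> vs!1" "vs!1 \<noteq> vs!2" "vs!0 \<noteq> vs!2"
      using nth_eq_iff_index_eq[OF dv, of 0 1] nth_eq_iff_index_eq[OF dv, of 1 2]
        nth_eq_iff_index_eq[OF dv, of 0 2] l by force+
    have "3 mod length vs \<noteq> 1" "3 mod length vs < length vs" using l
      by (auto simp: le_eq_less_or_eq)
    then have "vs!1 \<noteq> vs!(3 mod length vs)" using dv l by (auto simp: nth_eq_iff_index_eq)
    then show False using e0 e1 e2 n01 by auto
  qed
  show ?thesis unfolding spanning_tree_def using sub conn ac by blast
qed

lemma finite_complete_edges: "finite P \<Longrightarrow> finite (complete_edges P)"
proof -
  assume "finite P"
  moreover have "complete_edges P \<subseteq> Pow P" unfolding complete_edges_def by auto
  ultimately show ?thesis by (meson finite_Pow_iff finite_subset)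
qed

lemma MST_exists:
  assumes "finite P" "c \<in> P"
  shows "\<exists>T. is_MST d P T"
proof -
  let ?Sp = "{T. spanning_tree P T}"
  have fin: "finite ?Sp"
    by (rule finite_subset[of _ "Pow (complete_edges P)"])
       (auto simp: spanning_tree_def finite_complete_edges assms(1))
  have ne: "?Sp \<noteq> {}" using star_spanning[OF assms(2)] by blast
  let ?m = "Min (tree_energy d 1 ` ?Sp)"
  have "?m \<in> tree_energy d 1 ` ?Sp" using fin ne by simp
  then obtain T where T: "spanning_tree P T" "tree_energy d 1 T = ?m" by auto
  have "\<forall>T'. spanning_tree P T' \<longrightarrow> tree_energy d 1 T \<le> tree_energy d 1 T'"
    using T fin by auto
  then show ?thesis using T unfolding is_MST_def by blast
qed

lemma spanning_cover:
  assumes "spanning_tree P T" "x \<in> P" "y \<in> P" "x \<noteq> y"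
  shows "x \<in> \<Union>T"
proof -
  have "(adj T)\<^sup>*\<^sup>* x y" using assms unfolding spanning_tree_def graph_connected_def by blast
  then obtain z where "adj T x z" using assms(4) by (metis converse_rtranclpE)
  then show ?thesis unfolding adj_def by blast
qed

lemma spanning_card:
  assumes "spanning_tree P T" "finite P" "card P \<ge> 2"
  shows "card P \<le> 2 * card T"
proof -
  have sub: "T \<subseteq> complete_edges P" using assms(1) unfolding spanning_tree_def by blast
  have finT: "finite T" using sub finite_complete_edges[OF assms(2)] finite_subset by blast
  have c2: "card e = 2" if "e \<in> T" for e using sub that unfolding complete_edges_def by auto
  have "P \<subseteq> \<Union>T"
  proof
    fix x assume x: "x \<in> P"
    have "\<exists>y\<in>P. y \<noteq> x"
    proof (rule ccontr)
      assume "\<not> ?thesis"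
      then have "P \<subseteq> {x}" by blast
      then have "card P \<le> 1" by (metis card.empty card.insert empty_iff finite.intros(1) insert_absorb insert_not_empty le_SucI order_refl subset_singletonD card_0_eq One_nat_def)
      then show False using assms(3) by simp
    qed
    then show "x \<in> \<Union>T" using spanning_cover[OF assms(1) x] by metis
  qed
  then have "card P \<le> card (\<Union>T)"
  proof (rule card_mono[rotated])
    show "finite (\<Union>T)" using finT c2 by (metis card.infinite finite_Union zero_neq_numeral)
  qed
  also have "\<dots> \<le> sum card T" by (rule card_Union_le_sum_card)
  also have "\<dots> = 2 * card T" using c2 by simp
  finally show ?thesis .
qed

lemma edge_len_eq:
  assumes "\<And>a b. d a b = d b a"
  shows "edge_len d {x,y} = d x y"
  unfolding edge_len_def
  by (rule the_equality) (auto simp: doubleton_eq_iff assms)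

lemma lim_aux: "((\<lambda>x::real. p + K / ln (1/x)) \<longlongrightarrow> p) (at_right 0)"
  by real_asymp


lemma packing_bound:
  assumes ms: "Metric_space M d" and p: "p \<ge> 0"
    and H: "\<forall>S T. finite S \<and> S \<subseteq> M \<and> is_MST d S T \<longrightarrow> tree_energy d p T \<le> C"
    and e: "0 < \<epsilon>" and P: "finite P" "P \<subseteq> M"
    and disj: "\<forall>x\<in>P. \<forall>y\<in>P. x \<noteq> y \<longrightarrow> Metric_space.mball M d x \<epsilon> \<inter> Metric_space.mball M d y \<epsilon> = {}"
    and c2: "card P \<ge> 2"
  shows "real (card P) \<le> 2 * C * \<epsilon> powr (-p)"
proof -
  interpret Metric_space M d by (rule ms)
  obtain c where c: "c \<in> P" using c2 by fastforce
  obtain T where T: "is_MST d P T" using MST_exists[OF P(1) c] by blast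
  have EC: "tree_energy d p T \<le> C" using H T P by blast
  have sp: "spanning_tree P T" using T unfolding is_MST_def by blast
  have sub: "T \<subseteq> complete_edges P" using sp unfolding spanning_tree_def by blast
  have finT: "finite T" using sub finite_complete_edges[OF P(1)] finite_subset by blast
  have dist: "d x y \<ge> \<epsilon>" if "x \<in> P" "y \<in> P" "x \<noteq> y" for x y
  proof (rule ccontr)
    assume "\<not> ?thesis"
    then have "y \<in> mball x \<epsilon> \<inter> mball y \<epsilon>" using that P(2) e by auto
    then show False using disj that by blast
  qed
  have el: "\<epsilon> powr p \<le> edge_len d e powr p" if eT: "e \<in> T" for e
  proof -
    obtain x y where xy: "e = {x,y}" "x \<in> P" "y \<in> P" "x \<noteq> y"
      using sub eT unfolding complete_edges_def by blast
    have "edge_len d e = d x y" using xy(1) edge_len_eq[of d x y] commute by simp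
    then show ?thesis using dist[OF xy(2-4)] e p by (simp add: powr_mono2)
  qed
  have "real (card T) * \<epsilon> powr p \<le> tree_energy d p T"
    unfolding tree_energy_def using sum_mono[OF el, of T] by simp
  then have "real (card T) * \<epsilon> powr p \<le> C" using EC by linarith
  moreover have "real (card P) \<le> 2 * real (card T)" using spanning_card[OF sp P(1) c2] by linarith
  ultimately have "real (card P) * \<epsilon> powr p \<le> 2 * C"
  proof -
    assume a: "real (card T) * \<epsilon> powr p \<le> C" "real (card P) \<le> 2 * real (card T)"
    have "real (card P) * \<epsilon> powr p \<le> (2 * real (card T)) * \<epsilon> powr p"
      using a(2) by (intro mult_right_mono) auto
    then show ?thesis using a(1) by linarith
  qed
  then have "real (card P) \<le> 2 * C / \<epsilon> powr p" using e by (simp add: field_simps)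
  then show ?thesis by (simp add: powr_minus_divide)
qed


lemma ratio_bound:
  assumes ms: "Metric_space M d" and p: "p \<ge> 0"
    and H: "\<forall>S T. finite S \<and> S \<subseteq> M \<and> is_MST d S T \<longrightarrow> tree_energy d p T \<le> C"
    and e: "0 < \<epsilon>" "\<epsilon> < 1"
  shows "box_ratio M d \<epsilon> \<le> ereal (p + ln (2 * max C 1) / ln (1 / \<epsilon>))"
proof -
  define C' where "C' = max C 1"
  define B where "B = 2 * C' * \<epsilon> powr (-p)"
  have H': "\<forall>S T. finite S \<and> S \<subseteq> M \<and> is_MST d S T \<longrightarrow> tree_energy d p T \<le> C'"
    using H unfolding C'_def by force
  have ep1: "\<epsilon> powr p \<le> 1" using e p by (intro powr_le1) auto
  have ep0: "\<epsilon> powr p > 0" using e by simp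
  have ep: "\<epsilon> powr (-p) \<ge> 1" using ep1 ep0 by (simp add: powr_minus_divide)
  have C1: "2 * C' \<ge> 2" unfolding C'_def by simp
  have B2: "B \<ge> 2" unfolding B_def
    using mult_mono[OF C1 ep] C1 by simp
  have cardB: "real (card P) \<le> B" if "finite P" "P \<subseteq> M"
    "\<forall>x\<in>P. \<forall>y\<in>P. x \<noteq> y \<longrightarrow> Metric_space.mball M d x \<epsilon> \<inter> Metric_space.mball M d y \<epsilon> = {}" for P
  proof (cases "card P \<ge> 2")
    case True
    then show ?thesis using packing_bound[OF ms p H' e(1) that True] unfolding B_def by simp
  next
    case False
    then show ?thesis using B2 by simp
  qed
  have "packing_number M d \<epsilon> \<le> enat (nat \<lfloor>B\<rfloor>)"
    unfolding packing_number_def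
  proof (rule Sup_least, clarify)
    fix P assume "finite P" "P \<subseteq> M"
      "\<forall>x\<in>P. \<forall>y\<in>P. x \<noteq> y \<longrightarrow> Metric_space.mball M d x \<epsilon> \<inter> Metric_space.mball M d y \<epsilon> = {}"
    then have "real (card P) \<le> B" by (rule cardB)
    then have "card P \<le> nat \<lfloor>B\<rfloor>" by linarith
    then show "enat (card P) \<le> enat (nat \<lfloor>B\<rfloor>)" by simp
  qed
  then obtain n where n: "packing_number M d \<epsilon> = enat n" "n \<le> nat \<lfloor>B\<rfloor>"
    by (metis enat_ile enat_ord_simps(1))
  have nB: "real n \<le> B" using n(2) B2 by linarith
  have L: "ln (1 / \<epsilon>) > 0" using e by simp
  show ?thesis
  proof (cases "n = 0")
    case True
    then show ?thesis unfolding box_ratio_def using n by simp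
  next
    case False
    have "ln (real n) \<le> ln B" using nB False by simp
    also have "ln B = ln (2 * C') + p * ln (1 / \<epsilon>)"
      unfolding B_def C'_def using e by (simp add: ln_mult ln_powr ln_div)
    finally have "ln (real n) / ln (1 / \<epsilon>) \<le> (ln (2 * C') + p * ln (1 / \<epsilon>)) / ln (1 / \<epsilon>)"
      using L by (simp add: divide_right_mono)
    also have "\<dots> = p + ln (2 * C') / ln (1 / \<epsilon>)" using L by (simp add: field_simps)
    finally show ?thesis unfolding box_ratio_def using n False C'_def by simp
  qed
qed

theorem lemma5:
  fixes M :: "'a set" and d :: "'a \<Rightarrow> 'a \<Rightarrow> real"
  assumes "Metric_space M d"
  shows "dim_Box M d \<le> dim_MST M d"
  unfolding dim_MST_def
proof (rule Inf_greatest, clarify)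
  fix p C assume p: "p \<ge> 0"
    and H: "\<forall>S T. finite S \<and> S \<subseteq> M \<and> is_MST d S T \<longrightarrow> tree_energy d p T \<le> C"
  define K where "K = ln (2 * max C 1)"
  have ev: "eventually (\<lambda>\<epsilon>. box_ratio M d \<epsilon> \<le> ereal (p + K / ln (1 / \<epsilon>))) (at_right (0::real))"
  proof -
    have "eventually (\<lambda>\<epsilon>::real. 0 < \<epsilon> \<and> \<epsilon> < 1) (at_right 0)"
      by (simp add: eventually_at_right_field) (meson zero_less_one)
    then show ?thesis
      by eventually_elim (use ratio_bound[OF assms p H] K_def in auto)
  qed
  have "dim_Box M d \<le> Limsup (at_right 0) (\<lambda>\<epsilon>. ereal (p + K / ln (1 / \<epsilon>)))"
    unfolding dim_Box_def by (rule Limsup_mono[OF ev])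
  also have "\<dots> = ereal p"
    by (rule lim_imp_Limsup) (auto intro: lim_aux simp: trivial_limit_at_right_real)
  finally show "dim_Box M d \<le> ereal p" .
qed

end
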